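(* Let $s\in\mathbb{Z}$, and let $x\in G_{\alpha_s}$ and $y\in G_{\alpha_{s+1}}$ be such that $x\in \mathrm{Vor}_{G_{\alpha_{s+1}}}(y)$. Then $\mathrm{Vor}_{G_{\alpha_s}}(x)\subset \mathrm{Vor}_{G_{\alpha_{s+1}}}(y)$.
   Context: Fix $d\ge 1$, $\lambda>0$ and scales $\alpha_s:=\lambda 2^s$, $s\in\mathbb{Z}$. The grids $(G_{\alpha_s})_{s\in\mathbb{Z}}$ are subsets of $\mathbb{R}^d$ with $G_{\alpha_0}=\lambda\mathbb{Z}^d$ and, for every $s$, $G_{\alpha_{s+1}}=2(G_{\alpha_s}-O_s)+O_s+\frac{\alpha_s}{2}\varepsilon_s$ for some point $O_s\in G_{\alpha_s}$ and some sign vector $\varepsilon_s\in\{-1,+1\}^d$. Thus each $G_{\alpha_s}$ is a translate of $\alpha_s\mathbb{Z}^d$. For a grid $G$ and $x\in G$, $\mathrm{Vor}_G(x)$ denotes the Voronoi cell of $x$ with respect to $G$, i.e. the closed axis-parallel cube of side length $\alpha_s$ centered at $x$ when $G=G_{\alpha_s}$. *)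

theory Defs
  imports "HOL-Analysis.Analysis"
begin

definition scale :: "real \<Rightarrow> int \<Rightarrow> real" where
  "scale lam s = lam * 2 powi s"

definition scaled_lattice :: "real \<Rightarrow> (real ^ 'n) set" where
  "scaled_lattice lam = {x. \<exists>k :: 'n \<Rightarrow> int. x = (\<chi> i. lam * of_int (k i))}"

definition Vor :: "(real ^ 'n) set \<Rightarrow> real ^ 'n \<Rightarrow> (real ^ 'n) set" where
  "Vor G x = {z. \<forall>g\<in>G. dist z x \<le> dist z g}"

definition grid_family :: "real \<Rightarrow> (int \<Rightarrow> (real ^ 'n) set) \<Rightarrow> bool" where
  "grid_family lam G \<longleftrightarrow>
     G 0 = scaled_lattice lam \<and>
     (\<forall>s. \<exists>c\<in>G s. \<exists>\<epsilon> :: real ^ 'n. (\<forall>i. \<epsilon> $ i = 1 \<or> \<epsilon> $ i = -1) \<and>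
        G (s + 1) = (\<lambda>g. 2 *\<^sub>R (g - c) + c + (scale lam s / 2) *\<^sub>R \<epsilon>) ` G s)"

end

theory Submission
  imports Defs
begin

definition Lat :: "real ^ 'n \<Rightarrow> real \<Rightarrow> (real ^ 'n) set" where
  "Lat c a = {v. \<forall>i. \<exists>k::int. v $ i = c $ i + a * of_int k}"

lemma scale_succ: "lam \<noteq> 0 \<Longrightarrow> Defs.scale lam (s + 1) = 2 * Defs.scale lam s"
  unfolding scale_def by (simp add: power_int_add_1)

lemma scale_pos: "lam > 0 \<Longrightarrow> Defs.scale lam s > 0"
  unfolding scale_def by simp

lemma lat_preimage:
  fixes c c0 e :: "real ^ 'n"
  assumes "a \<noteq> 0"
  shows "{v. 2 *\<^sub>R (v - c0) + c0 + (a / 2) *\<^sub>R e \<in> Lat c (2 * a)}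
         = Lat ((1/2) *\<^sub>R (c + c0 - (a / 2) *\<^sub>R e)) a"
proof -
  have "(2 * (v $ i - c0 $ i) + c0 $ i + a / 2 * e $ i = c $ i + 2 * a * of_int k)
        \<longleftrightarrow> (v $ i = (c $ i + c0 $ i - a / 2 * e $ i) / 2 + a * of_int k)"
    for v :: "real ^ 'n" and i k
    by (auto simp: field_simps)
  then have "(\<exists>k::int. (2 *\<^sub>R (v - c0) + c0 + (a / 2) *\<^sub>R e) $ i = (c $ i + 2 * a * of_int k))
     \<longleftrightarrow> (\<exists>k::int. v $ i = ((1/2) *\<^sub>R (c + c0 - (a / 2) *\<^sub>R e)) $ i + a * of_int k)"
    for v :: "real ^ 'n" and i
    by (simp add: divide_simps) 
  then show ?thesis unfolding Lat_def by (simp only: mem_Collect_eq) 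
qed

lemma lat_image:
  fixes c c0 e :: "real ^ 'n"
  assumes "a \<noteq> 0"
  shows "(\<lambda>v. 2 *\<^sub>R (v - c0) + c0 + (a / 2) *\<^sub>R e) ` Lat c a
         = Lat (2 *\<^sub>R c - c0 + (a / 2) *\<^sub>R e) (2 * a)"
proof
  show "(\<lambda>v. 2 *\<^sub>R (v - c0) + c0 + (a / 2) *\<^sub>R e) ` Lat c a
         \<subseteq> Lat (2 *\<^sub>R c - c0 + (a / 2) *\<^sub>R e) (2 * a)"
  proof
    fix w assume "w \<in> (\<lambda>v. 2 *\<^sub>R (v - c0) + c0 + (a / 2) *\<^sub>R e) ` Lat c a"
    then obtain v where v: "v \<in> Lat c a" and w: "w = 2 *\<^sub>R (v - c0) + c0 + (a / 2) *\<^sub>R e" by auto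
    show "w \<in> Lat (2 *\<^sub>R c - c0 + (a / 2) *\<^sub>R e) (2 * a)"
      unfolding Lat_def mem_Collect_eq
    proof (intro allI)
      fix i
      obtain k :: int where "v $ i = c $ i + a * of_int k" using v unfolding Lat_def by blast
      then have "w $ i = (2 *\<^sub>R c - c0 + (a / 2) *\<^sub>R e) $ i + 2 * a * of_int k"
        unfolding w by (simp add: algebra_simps)
      then show "\<exists>k::int. w $ i = (2 *\<^sub>R c - c0 + (a / 2) *\<^sub>R e) $ i + 2 * a * of_int k" by blast
    qed
  qed
next
  show "Lat (2 *\<^sub>R c - c0 + (a / 2) *\<^sub>R e) (2 * a)
        \<subseteq> (\<lambda>v. 2 *\<^sub>R (v - c0) + c0 + (a / 2) *\<^sub>R e) ` Lat c a"
  proof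
    fix w assume "w \<in> Lat (2 *\<^sub>R c - c0 + (a / 2) *\<^sub>R e) (2 * a)"
    then have "\<forall>i. \<exists>k::int. w $ i = (2 *\<^sub>R c - c0 + (a / 2) *\<^sub>R e) $ i + 2 * a * of_int k"
      unfolding Lat_def by blast
    then obtain K where K: "\<And>i. w $ i = (2 *\<^sub>R c - c0 + (a / 2) *\<^sub>R e) $ i + 2 * a * of_int (K i)"
      by metis
    define v where "v = (\<chi> i. c $ i + a * of_int (K i))"
    have "v \<in> Lat c a" unfolding Lat_def v_def by auto
    moreover have "w = 2 *\<^sub>R (v - c0) + c0 + (a / 2) *\<^sub>R e"
      by (simp add: vec_eq_iff v_def K algebra_simps)
    ultimately show "w \<in> (\<lambda>v. 2 *\<^sub>R (v - c0) + c0 + (a / 2) *\<^sub>R e) ` Lat c a" by blast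
  qed
qed

lemma grid_lat:
  assumes lam: "lam > 0" and gf: "grid_family lam G"
  shows "\<exists>c. G s = Lat c (scale lam s)"
proof (induction s rule: int_induct[where k = 0])
  case base
  have "G 0 = scaled_lattice lam" using gf unfolding grid_family_def by blast
  also have "\<dots> = Lat 0 (scale lam 0)"
  proof
    show "scaled_lattice lam \<subseteq> Lat 0 (scale lam 0)"
      unfolding scaled_lattice_def Lat_def scale_def by auto
  next
    show "Lat 0 (scale lam 0) \<subseteq> scaled_lattice lam"
    proof
      fix x assume "x \<in> Lat 0 (scale lam 0)"
      then have "\<forall>i. \<exists>k::int. x $ i = lam * of_int k" unfolding Lat_def scale_def by simp
      then obtain K where "\<And>i. x $ i = lam * of_int (K i)" by metis
      then have "x = (\<chi> i. lam * of_int (K i))" by (simp add: vec_eq_iff)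
      then show "x \<in> scaled_lattice lam" unfolding scaled_lattice_def by blast
    qed
  qed
  finally show ?case by blast
next
  case (step1 i)
  then obtain c where c: "G i = Lat c (scale lam i)" by blast
  from gf obtain c0 e where c0: "c0 \<in> G i" and
    e: "G (i + 1) = (\<lambda>g. 2 *\<^sub>R (g - c0) + c0 + (scale lam i / 2) *\<^sub>R e) ` G i"
    unfolding grid_family_def by blast
  have "G (i + 1) = Lat (2 *\<^sub>R c - c0 + (scale lam i / 2) *\<^sub>R e) (2 * scale lam i)"
    unfolding e c by (rule lat_image) (use lam in \<open>simp add: scale_def\<close>)
  then show ?case using scale_succ[of lam i] lam by auto
next
  case (step2 i)
  then obtain c where c: "G i = Lat c (scale lam i)" by blast
  from gf obtain c0 e where c0: "c0 \<in> G (i - 1)" and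
    e: "G (i - 1 + 1) = (\<lambda>g. 2 *\<^sub>R (g - c0) + c0 + (scale lam (i - 1) / 2) *\<^sub>R e) ` G (i - 1)"
    unfolding grid_family_def by blast
  let ?f = "\<lambda>g. 2 *\<^sub>R (g - c0) + c0 + (scale lam (i - 1) / 2) *\<^sub>R e"
  have inj: "inj ?f" by (rule injI) (simp add: algebra_simps)
  have "G (i - 1) = {v. ?f v \<in> G i}"
  proof -
    have "G i = ?f ` G (i - 1)" using e by simp
    then show ?thesis using inj by (auto simp: inj_image_mem_iff)
  qed
  also have "\<dots> = {v. ?f v \<in> Lat c (2 * scale lam (i - 1))}"
    using c scale_succ[of lam "i - 1"] lam by simp
  also have "\<dots> = Lat ((1/2) *\<^sub>R (c + c0 - (scale lam (i - 1) / 2) *\<^sub>R e)) (scale lam (i - 1))"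
    by (rule lat_preimage) (use lam in \<open>simp add: scale_def\<close>)
  finally show ?case by blast
qed

lemma key_ineq:
  fixes a t :: real and m :: int
  assumes a: "a > 0" and t: "\<bar>t\<bar> \<le> a / 2"
  shows "\<bar>t\<bar> \<le> \<bar>t - a * of_int m\<bar>"
proof (cases "m = 0")
  case True then show ?thesis by simp
next
  case False
  then have "1 \<le> \<bar>real_of_int m\<bar>" by linarith
  then have "a \<le> a * \<bar>real_of_int m\<bar>" using a by simp
  also have "\<dots> = \<bar>a * of_int m\<bar>" using a by (simp add: abs_mult)
  finally have "a \<le> \<bar>a * of_int m\<bar>" .
  then show ?thesis using t by linarith
qed

lemma vor_lat:
  fixes c x :: "real ^ 'n"
  assumes a: "a > 0" and x: "x \<in> Lat c a"
  shows "Vor (Lat c a) x = {z. \<forall>i. \<bar>z $ i - x $ i\<bar> \<le> a / 2}"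
proof
  show "{z. \<forall>i. \<bar>z $ i - x $ i\<bar> \<le> a / 2} \<subseteq> Vor (Lat c a) x"
  proof
    fix z assume z: "z \<in> {z. \<forall>i. \<bar>z $ i - x $ i\<bar> \<le> a / 2}"
    show "z \<in> Vor (Lat c a) x"
      unfolding Vor_def mem_Collect_eq
    proof
      fix g assume g: "g \<in> Lat c a"
      have "\<bar>z $ i - x $ i\<bar> \<le> \<bar>z $ i - g $ i\<bar>" for i
      proof -
        obtain kx :: int where kx: "x $ i = c $ i + a * of_int kx" using x unfolding Lat_def by blast
        obtain kg :: int where kg: "g $ i = c $ i + a * of_int kg" using g unfolding Lat_def by blast
        have "z $ i - g $ i = (z $ i - x $ i) - a * of_int (kg - kx)"
          using kx kg by (simp add: algebra_simps)
        moreover have "\<bar>z $ i - x $ i\<bar> \<le> a / 2" using z by simp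
        ultimately show ?thesis using key_ineq[OF a, of "z $ i - x $ i" "kg - kx"] by simp
      qed
      then show "dist z x \<le> dist z g"
        unfolding dist_vec_def by (intro L2_set_mono) (auto simp: dist_real_def)
    qed
  qed
next
  show "Vor (Lat c a) x \<subseteq> {z. \<forall>i. \<bar>z $ i - x $ i\<bar> \<le> a / 2}"
  proof
    fix z assume z: "z \<in> Vor (Lat c a) x"
    show "z \<in> {z. \<forall>i. \<bar>z $ i - x $ i\<bar> \<le> a / 2}"
    proof (rule CollectI, rule allI, rule ccontr)
      fix i assume i: "\<not> \<bar>z $ i - x $ i\<bar> \<le> a / 2"
      define d :: int where "d = (if z $ i > x $ i then 1 else -1)"
      define g where "g = x + (a * of_int d) *\<^sub>R axis i (1::real)"
      have gc: "g $ j = x $ j + (if j = i then a * of_int d else 0)" for j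
        unfolding g_def by (simp add: axis_def)
      have "g \<in> Lat c a"
        unfolding Lat_def mem_Collect_eq
      proof
        fix j
        obtain k :: int where k: "x $ j = c $ j + a * of_int k" using x unfolding Lat_def by blast
        show "\<exists>k::int. g $ j = c $ j + a * of_int k"
        proof (cases "j = i")
          case True
          then show ?thesis using k by (intro exI[of _ "k + d"]) (simp add: gc algebra_simps)
        next
          case False
          then show ?thesis using k by (intro exI[of _ k]) (simp add: gc)
        qed
      qed
      then have le: "dist z x \<le> dist z g" using z unfolding Vor_def by blast
      have lt_i: "dist (z $ i) (g $ i) < dist (z $ i) (x $ i)"
        using i a unfolding dist_real_def gc d_def by (auto simp: abs_if)
      have "(\<Sum>j\<in>UNIV. (dist (z $ j) (g $ j))\<^sup>2) < (\<Sum>j\<in>UNIV. (dist (z $ j) (x $ j))\<^sup>2)"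
      proof (rule sum_strict_mono_ex1)
        show "\<forall>j\<in>UNIV. (dist (z $ j) (g $ j))\<^sup>2 \<le> (dist (z $ j) (x $ j))\<^sup>2"
        proof
          fix j :: 'n
          show "(dist (z $ j) (g $ j))\<^sup>2 \<le> (dist (z $ j) (x $ j))\<^sup>2"
          proof (cases "j = i")
            case True
            then show ?thesis using lt_i by (simp add: power_mono)
          next
            case False
            then show ?thesis by (simp add: gc)
          qed
        qed
        show "\<exists>j\<in>UNIV. (dist (z $ j) (g $ j))\<^sup>2 < (dist (z $ j) (x $ j))\<^sup>2"
          using lt_i by (intro bexI[of _ i]) (auto intro: power_strict_mono)
      qed simp
      then have "dist z g < dist z x"
        unfolding dist_vec_def L2_set_def by (rule real_sqrt_less_mono)
      then show False using le by simp
    qed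
  qed
qed

theorem lemma3:
  fixes lam :: real and G :: "int \<Rightarrow> (real ^ 'n) set"
    and s :: int and x y :: "real ^ 'n"
  assumes "lam > 0"
    and "grid_family lam G"
    and "x \<in> G s" and "y \<in> G (s + 1)"
    and "x \<in> Vor (G (s + 1)) y"
  shows "Vor (G s) x \<subseteq> Vor (G (s + 1)) y"
proof -
  note lam = assms(1) and gf = assms(2)
  define a where "a = Defs.scale lam s"
  have a: "a > 0" unfolding a_def using lam by (rule scale_pos)
  obtain cs where cs: "G s = Lat cs a" unfolding a_def using grid_lat[OF lam gf] by blast
  obtain cs1 where cs1: "G (s + 1) = Lat cs1 (2 * a)"
    unfolding a_def using grid_lat[OF lam gf, of "s + 1"] scale_succ[of lam s] lam by auto
  from gf obtain c0 e where c0: "c0 \<in> G s" and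
    e: "\<forall>i. e $ i = 1 \<or> e $ i = -1" and
    ef: "G (s + 1) = (\<lambda>g. 2 *\<^sub>R (g - c0) + c0 + (a / 2) *\<^sub>R e) ` G s"
    unfolding grid_family_def a_def by blast
  obtain g where g: "g \<in> G s" and yg: "y = 2 *\<^sub>R (g - c0) + c0 + (a / 2) *\<^sub>R e"
    using assms(4) ef by blast
  have VorS: "Vor (G s) x = {z. \<forall>i. \<bar>z $ i - x $ i\<bar> \<le> a / 2}"
    using vor_lat[OF a, of x cs] assms(3) cs by simp
  have VorS1: "Vor (G (s + 1)) y = {z. \<forall>i. \<bar>z $ i - y $ i\<bar> \<le> 2 * a / 2}"
    using vor_lat[of "2 * a" y cs1] a assms(4) cs1 by simp
  have half: "\<bar>y $ i - x $ i\<bar> = a / 2" for i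
  proof -
    obtain kx :: int where kx: "x $ i = cs $ i + a * of_int kx" using assms(3) cs unfolding Lat_def by blast
    obtain kg :: int where kg: "g $ i = cs $ i + a * of_int kg" using g cs unfolding Lat_def by blast
    obtain k0 :: int where k0: "c0 $ i = cs $ i + a * of_int k0" using c0 cs unfolding Lat_def by blast
    obtain ei :: int where ei: "e $ i = of_int ei" and ei1: "ei = 1 \<or> ei = -1"
      using e[rule_format, of i] by (metis of_int_1 of_int_minus)
    define m where "m = 4 * kg - 2 * k0 - 2 * kx + ei"
    have ym: "y $ i - x $ i = a / 2 * of_int m"
      unfolding m_def yg using kx kg k0 ei by (simp add: algebra_simps)
    have "\<bar>x $ i - y $ i\<bar> \<le> a" using assms(5) VorS1 by simp
    then have "\<bar>a / 2 * of_int m\<bar> \<le> a" using ym by (simp add: abs_minus_commute)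
    then have "a / 2 * \<bar>of_int m\<bar> \<le> a / 2 * 2" using a by (simp add: abs_mult)
    then have "\<bar>real_of_int m\<bar> \<le> 2" using a by (simp only: mult_le_cancel_left_pos)
    then have "\<bar>m\<bar> \<le> 2" by linarith
    then have "\<bar>m\<bar> = 1" using ei1 unfolding m_def by presburger
    then have "\<bar>real_of_int m\<bar> = 1" by linarith
    then have "\<bar>a / 2 * of_int m\<bar> = a / 2" using a by (simp add: abs_mult)
    then show ?thesis unfolding ym .
  qed
  show ?thesis
  proof
    fix z assume "z \<in> Vor (G s) x"
    then have "\<bar>z $ i - x $ i\<bar> \<le> a / 2" for i using VorS by simp
    then have "\<bar>z $ i - y $ i\<bar> \<le> 2 * a / 2" for i
      using half[of i] \<open>\<And>i. \<bar>z $ i - x $ i\<bar> \<le> a / 2\<close>[of i] by linarith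
    then show "z \<in> Vor (G (s + 1)) y" using VorS1 by simp
  qed
qed

end
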